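(* Let $\|\cdot\|$ be a strictly convex norm on $\mathbb{R}^n$ that is continuously differentiable on $\mathbb{R}^n\setminus\{0\}$, with gradient $N(x)$ at $x\ne0$, and set $h(x,y)=\|y\|-\langle y,N(x)\rangle$ for $x\neq 0$, and $h(0,z)=0$ for all $z$. Suppose $\|\cdot\|$ is geometrically convex with constants $r>0$, $\Lambda>2$, i.e. $$\Lambda\, h(x,x+y)\le h(x,x+2y)\quad\text{for all } x\neq0,\ \|y\|\le r\|x\|.$$ Then for all $x\neq 0$ and $\|y\|\le r\|x\|$, $$h(x,x+2y)\le \frac{\Lambda}{\Lambda-2}\,h(x+2y,x).$$ Equivalently, if $x\ne0$ and $\|z-x\|\le 2r\|x\|$, then $h(x,z)\le \frac{\Lambda}{\Lambda-2}h(z,x)$.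
   Context: $\langle\cdot,\cdot\rangle$ is the Euclidean inner product. Strict convexity of the norm means: if $x,y\neq0$ and $\|x+y\|=\|x\|+\|y\|$, then $y=\alpha x$ for some $\alpha>0$. *)

theory Defs
  imports "HOL-Analysis.Analysis"
begin

definition is_norm :: "(real^'n \<Rightarrow> real) \<Rightarrow> bool" where
  "is_norm nrm \<longleftrightarrow>
     (\<forall>x. 0 \<le> nrm x) \<and> (\<forall>x. nrm x = 0 \<longleftrightarrow> x = 0) \<and>
     (\<forall>c x. nrm (c *\<^sub>R x) = \<bar>c\<bar> * nrm x) \<and>
     (\<forall>x y. nrm (x + y) \<le> nrm x + nrm y)"

definition strictly_convex_norm :: "(real^'n \<Rightarrow> real) \<Rightarrow> bool" where
  "strictly_convex_norm nrm \<longleftrightarrow> is_norm nrm \<and>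
     (\<forall>x y. x \<noteq> 0 \<longrightarrow> y \<noteq> 0 \<longrightarrow> nrm (x + y) = nrm x + nrm y \<longrightarrow>
        (\<exists>\<alpha>>0. y = \<alpha> *\<^sub>R x))"

definition hfun :: "(real^'n \<Rightarrow> real) \<Rightarrow> (real^'n \<Rightarrow> real^'n) \<Rightarrow> real^'n \<Rightarrow> real^'n \<Rightarrow> real" where
  "hfun nrm N x y = (if x = 0 then 0 else nrm y - y \<bullet> N x)"

end

theory Submission
  imports Defs
begin

lemma subgrad:
  fixes nrm :: "real^'n \<Rightarrow> real" and N :: "real^'n \<Rightarrow> real^'n"
  assumes nm: "is_norm nrm"
    and d: "(nrm has_derivative (\<lambda>v. v \<bullet> N z)) (at z)"
  shows "nrm (z + v) - nrm z \<ge> v \<bullet> N z"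
proof -
  define g where "g = (\<lambda>t::real. nrm (z + t *\<^sub>R v))"
  have hom: "\<And>c x. nrm (c *\<^sub>R x) = \<bar>c\<bar> * nrm x" and tri: "\<And>x y. nrm (x + y) \<le> nrm x + nrm y"
    using nm unfolding is_norm_def by auto
  have cv: "convex_on UNIV g"
  proof (rule convex_onI)
    fix t a b :: real assume t: "0 < t" "t < 1"
    have eq: "z + ((1 - t) * a + t * b) *\<^sub>R v = (1 - t) *\<^sub>R (z + a *\<^sub>R v) + t *\<^sub>R (z + b *\<^sub>R v)"
      by (simp add: algebra_simps scaleR_add_right)
    show "g ((1 - t) *\<^sub>R a + t *\<^sub>R b) \<le> (1 - t) * g a + t * g b"
      unfolding g_def using tri[of "(1 - t) *\<^sub>R (z + a *\<^sub>R v)" "t *\<^sub>R (z + b *\<^sub>R v)"] t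
      by (simp add: eq hom)
  qed simp
  have dl: "((\<lambda>t::real. z + t *\<^sub>R v) has_derivative (\<lambda>t. t *\<^sub>R v)) (at 0)"
    by (auto intro!: derivative_eq_intros)
  have "(g has_derivative (\<lambda>t. (t *\<^sub>R v) \<bullet> N z)) (at 0)"
    unfolding g_def using has_derivative_compose[OF dl, of nrm "\<lambda>v. v \<bullet> N z"] d
    by (simp add: o_def)
  moreover have "(\<lambda>t. (t *\<^sub>R v) \<bullet> N z) = (*) (v \<bullet> N z)" by (auto simp: fun_eq_iff)
  ultimately have "(g has_field_derivative (v \<bullet> N z)) (at 0 within UNIV)"
    by (simp add: has_field_derivative_def)
  from convex_on_imp_above_tangent[OF cv _ _ _ this, of 1] have "g 1 - g 0 \<ge> v \<bullet> N z" by simp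
  then show ?thesis by (simp add: g_def)
qed

theorem lemma4p10:
  fixes nrm :: "real^'n \<Rightarrow> real" and N :: "real^'n \<Rightarrow> real^'n" and r \<Lambda> :: real
  assumes sc: "strictly_convex_norm nrm"
    and grad: "\<And>x. x \<noteq> 0 \<Longrightarrow> (nrm has_derivative (\<lambda>v. v \<bullet> N x)) (at x)"
    and C1: "continuous_on (- {0}) N"
    and r: "r > 0" and Lam: "\<Lambda> > 2"
    and geo: "\<And>x y. x \<noteq> 0 \<Longrightarrow> nrm y \<le> r * nrm x \<Longrightarrow>
                \<Lambda> * hfun nrm N x (x + y) \<le> hfun nrm N x (x + 2 *\<^sub>R y)"
    and x: "x \<noteq> 0" and y: "nrm y \<le> r * nrm x"
  shows "hfun nrm N x (x + 2 *\<^sub>R y) \<le> \<Lambda> / (\<Lambda> - 2) * hfun nrm N (x + 2 *\<^sub>R y) x"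
proof -
  have nm: "is_norm nrm" using sc unfolding strictly_convex_norm_def by auto
  have hom: "\<And>c x. nrm (c *\<^sub>R x) = \<bar>c\<bar> * nrm x" and tri: "\<And>x y. nrm (x + y) \<le> nrm x + nrm y"
    and z0: "nrm 0 = 0"
    using nm unfolding is_norm_def by auto
  have sg: "\<And>z v. z \<noteq> 0 \<Longrightarrow> nrm (z + v) - nrm z \<ge> v \<bullet> N z"
  proof -
    fix z v :: "real^'n" assume "z \<noteq> 0"
    then show "nrm (z + v) - nrm z \<ge> v \<bullet> N z" using subgrad[of nrm N z v, OF nm grad[OF \<open>z \<noteq> 0\<close>]] by blast
  qed
  have dual: "\<And>z v. z \<noteq> 0 \<Longrightarrow> v \<bullet> N z \<le> nrm v"
    using sg tri by (smt (verit))
  have euler: "\<And>z. z \<noteq> 0 \<Longrightarrow> z \<bullet> N z = nrm z"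
  proof -
    fix z :: "real^'n" assume "z \<noteq> 0"
    from sg[OF this, of "-z"] dual[OF this, of z] show "z \<bullet> N z = nrm z" by (simp add: z0)
  qed
  define z where "z = x + 2 *\<^sub>R y"
  define A where "A = hfun nrm N x z"
  define B where "B = hfun nrm N z x"
  define c where "c = hfun nrm N x (x + y)"
  have g: "\<Lambda> * c \<le> A" using geo[OF x y] by (simp add: A_def c_def z_def)
  have Lpos: "\<Lambda> - 2 > 0" using Lam by simp
  show ?thesis
  proof (cases "z = 0")
    case True
    then have "A = 0" "B = 0" by (simp_all add: A_def B_def hfun_def x z0)
    then show ?thesis by (simp add: A_def B_def z_def)
  next
    case False
    have xz: "x + z = 2 *\<^sub>R (x + y)" by (simp add: z_def algebra_simps scaleR_2)
    have d1: "(x + z) \<bullet> N z \<le> nrm (x + z)" by (rule dual[OF False])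
    have e: "z \<bullet> N z = nrm z" by (rule euler[OF False])
    have ex: "x \<bullet> N x = nrm x" by (rule euler[OF x])
    have nxz: "nrm (x + z) = 2 * nrm (x + y)" using xz hom[of 2 "x+y"] by simp
    have zx: "z \<bullet> N x = x \<bullet> N x + 2 * (y \<bullet> N x)" by (simp add: z_def inner_add_left)
    have "A - 2 * c \<le> B"
      using d1 e ex nxz zx False x
      by (simp add: A_def B_def c_def hfun_def inner_add_left algebra_simps)
    then have "\<Lambda> * (A - 2 * c) \<le> \<Lambda> * B" using Lam by (intro mult_left_mono) auto
    then have "(\<Lambda> - 2) * A \<le> \<Lambda> * B" using g by (simp add: algebra_simps)
    then have "A \<le> \<Lambda> / (\<Lambda> - 2) * B" using Lpos by (simp add: field_simps)
    then show ?thesis by (simp add: A_def B_def z_def)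
  qed
qed

end
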